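(* For every $q>1$ and every positive increasing sequence $\{M_j\}_{j\ge1}$ of real numbers, $$\liminf_{j\to\infty}\frac{j\,(M_j-M_{j-1})}{M_j^{\,q}}=0.$$ *)

theory Defs
  imports "HOL-Analysis.Analysis"
begin

end

theory Submission
  imports Defs "HOL-Analysis.Analysis"
begin

lemma key_ineq:
  fixes a b q :: real
  assumes "q > 1" "0 < a" "a \<le> b"
  shows "(b - a) / b powr q \<le> (a powr (1 - q) - b powr (1 - q)) / (q - 1)"
proof (cases "a = b")
  case True then show ?thesis by simp
next
  case False
  with assms have ab: "a < b" by simp
  have der: "((\<lambda>x. x powr (1 - q)) has_real_derivative (1 - q) * x powr (1 - q - 1)) (at x)"
    if "a \<le> x" "x \<le> b" for x
    using that assms by (auto intro!: derivative_eq_intros)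
  obtain z where z: "z > a" "z < b"
    "b powr (1 - q) - a powr (1 - q) = (b - a) * ((1 - q) * z powr (1 - q - 1))"
    using MVT2[OF ab der] by blast
  have zpos: "z > 0" using z assms by simp
  have "b powr q \<ge> z powr q" using z zpos assms by (intro powr_mono2) auto
  hence "1 / b powr q \<le> 1 / z powr q" using zpos ab by (intro divide_left_mono) (auto intro!: mult_pos_pos)
  also have "1 / z powr q = z powr (1 - q - 1)" using zpos
    by (simp add: powr_minus_divide)
  finally have le: "1 / b powr q \<le> z powr (1 - q - 1)" .
  have "(b - a) / b powr q = (b - a) * (1 / b powr q)" by simp
  also have "\<dots> \<le> (b - a) * z powr (1 - q - 1)" using le ab by (intro mult_left_mono) auto
  also have "\<dots> = (a powr (1 - q) - b powr (1 - q)) / (q - 1)"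
    using z(3) assms by (simp add: field_simps)
  finally show ?thesis .
qed

theorem lemma5p1:
  fixes M :: "nat \<Rightarrow> real" and q :: real
  assumes "q > 1"
    and pos: "\<And>j. j \<ge> 1 \<Longrightarrow> M j > 0"
    and incr: "\<And>j. j \<ge> 1 \<Longrightarrow> M j \<le> M (Suc j)"
  shows "Liminf sequentially
           (\<lambda>j. ereal (real j * (M j - M (j - 1)) / (M j powr q))) = 0"
proof (rule antisym)
  let ?t = "\<lambda>j. real j * (M j - M (j - 1)) / (M j powr q)"
  show "0 \<le> Liminf sequentially (\<lambda>j. ereal (?t j))"
  proof (rule Liminf_bounded)
    show "\<forall>\<^sub>F j in sequentially. 0 \<le> ereal (?t j)"
      unfolding eventually_sequentially
    proof (intro exI[of _ 2] allI impI)
      fix j :: nat assume "2 \<le> j"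
      then obtain k where k: "j = Suc k" "k \<ge> 1" by (cases j) auto
      have "M k \<le> M j" using incr[OF k(2)] k by simp
      then show "0 \<le> ereal (?t j)" using k by simp
    qed
  qed
  show "Liminf sequentially (\<lambda>j. ereal (?t j)) \<le> 0"
  proof (rule ccontr)
    assume "\<not> ?thesis"
    hence "0 < Liminf sequentially (\<lambda>j. ereal (?t j))" by simp
    then obtain e where e: "0 < ereal e" "ereal e < Liminf sequentially (\<lambda>j. ereal (?t j))"
      using ereal_dense2 by blast
    from less_LiminfD[OF e(2)] obtain N where N: "\<And>j. j \<ge> N \<Longrightarrow> e < ?t j"
      unfolding eventually_sequentially by auto
    have epos: "e > 0" using e by simp
    define L where "L = max N 2 - 1"
    have L1: "L \<ge> 1" unfolding L_def by simp
    define f where "f = (\<lambda>x::real. x powr (1 - q))"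
    define h where "h = (\<lambda>n. - f (M (n + L)) / (q - 1))"
    define g where "g = (\<lambda>n. e / real (n + Suc L))"
    have step: "g n \<le> h (Suc n) - h n" for n
    proof -
      let ?j = "Suc (n + L)"
      have jN: "?j \<ge> N" unfolding L_def by simp
      have Mp: "M (n + L) > 0" using pos L1 by simp
      have Mle: "M (n + L) \<le> M ?j" using incr L1 by simp
      have Mjp: "M ?j > 0" using pos by simp
      have "e < ?t ?j" using N[OF jN] .
      hence "e < real ?j * ((M ?j - M (n + L)) / M ?j powr q)" by simp
      hence "e / real ?j < (M ?j - M (n + L)) / M ?j powr q"
        by (simp add: field_simps)
      also have "\<dots> \<le> (f (M (n + L)) - f (M ?j)) / (q - 1)"
        unfolding f_def using key_ineq[OF assms(1) Mp Mle] .
      also have "\<dots> = h (Suc n) - h n" unfolding h_def by (simp add: diff_divide_distrib)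
      finally show ?thesis unfolding g_def by simp
    qed
    have hnonpos: "h n \<le> 0" for n
      unfolding h_def f_def using assms(1) by simp
    have "summable g"
    proof (rule summableI_nonneg_bounded)
      show "0 \<le> g n" for n unfolding g_def using epos by simp
      show "sum g {..<n} \<le> - h 0" for n
      proof -
        have "sum g {..<n} \<le> (\<Sum>i<n. h (Suc i) - h i)" by (intro sum_mono step)
        also have "\<dots> = h n - h 0" by (rule sum_lessThan_telescope)
        finally show ?thesis using hnonpos[of n] by simp
      qed
    qed
    hence "summable (\<lambda>n. (1 / e) * g n)" by (rule summable_mult)
    hence "summable (\<lambda>n. inverse (real (n + Suc L)))"
      unfolding g_def using epos by (simp add: field_simps)
    hence "summable (\<lambda>n. inverse (real n))"
      using summable_iff_shift[of "\<lambda>n. inverse (real n)" "Suc L"] by simp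
    then show False using not_summable_harmonic by blast
  qed
qed

end
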